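(* Let $\mathcal{S}$ be a state space, let $\mathsf{N}^{(1)},\ldots,\mathsf{N}^{(l)}$ be measurements on $\mathcal{S}$ with common finite outcome set $\Omega_1$, let $(p_i)_{i=1}^l$ be a probability distribution, and let $\mathsf{M}^{(2)},\ldots,\mathsf{M}^{(k)}$ be measurements on $\mathcal{S}$ with finite outcome sets $\Omega_2,\ldots,\Omega_k$. Then $$\bar P\Big(\sum_{i=1}^l p_i\mathsf{N}^{(i)},\mathsf{M}^{(2)},\ldots,\mathsf{M}^{(k)}\Big)\le\sum_{i=1}^l p_i\,\bar P(\mathsf{N}^{(i)},\mathsf{M}^{(2)},\ldots,\mathsf{M}^{(k)})\le\max_j\bar P(\mathsf{N}^{(j)},\mathsf{M}^{(2)},\ldots,\mathsf{M}^{(k)}).$$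
   Context: General probabilistic theory setting: a state space $\mathcal{S}$ is a compact convex subset of a finite-dimensional real vector space, embedded as a base of a closed generating proper cone in a vector space $V$, with unit effect $u$. Effects are linear functionals $e$ on $V$ with $0\le e\le1$ on $\mathcal{S}$; $\|f\|=\max_{s\in\mathcal{S}}|f(s)|$. A measurement with finite outcome set $\Omega$ is a map $x\mapsto\mathsf{M}_x$ to effects with $\sum_x\mathsf{M}_x=u$; the mixture $\sum_ip_i\mathsf{N}^{(i)}$ has effects $\sum_ip_i\mathsf{N}^{(i)}_x$. For measurements $\mathsf{M}^{(1)},\ldots,\mathsf{M}^{(k)}$ with outcome sets of sizes $m_1,\ldots,m_k$, the random access test success probability is $\bar P(\mathsf{M}^{(1)},\ldots,\mathsf{M}^{(k)})=\frac{1}{k\,m_1\cdots m_k}\sum_{(x_1,\ldots,x_k)}\|\mathsf{M}^{(1)}_{x_1}+\cdots+\mathsf{M}^{(k)}_{x_k}\|$. *)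

theory Defs
  imports "HOL-Analysis.Analysis"
begin

text \<open>The state space S is a compact convex set which is a base
of the closed, generating, proper cone (cone hull S), with unit effect u (u = 1 on S).\<close>

definition gpt_state_space :: "'v::euclidean_space set \<Rightarrow> ('v \<Rightarrow> real) \<Rightarrow> bool" where
  "gpt_state_space S u \<longleftrightarrow>
     S \<noteq> {} \<and> compact S \<and> convex S \<and> linear u \<and> (\<forall>s\<in>S. u s = 1) \<and>
     closed (cone hull S) \<and> span S = UNIV \<and>
     cone hull S \<inter> uminus ` (cone hull S) = {0}"

definition gpt_effect :: "'v::euclidean_space set \<Rightarrow> ('v \<Rightarrow> real) \<Rightarrow> bool" where
  "gpt_effect S e \<longleftrightarrow> linear e \<and> (\<forall>s\<in>S. 0 \<le> e s \<and> e s \<le> 1)"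

text \<open>\<open>\<parallel>f\<parallel> = max over S of |f s|\<close> (attained since S compact, f continuous).\<close>
definition gpt_norm :: "'v::euclidean_space set \<Rightarrow> ('v \<Rightarrow> real) \<Rightarrow> real" where
  "gpt_norm S f = (SUP s\<in>S. \<bar>f s\<bar>)"

definition gpt_measurement ::
  "'v::euclidean_space set \<Rightarrow> ('v \<Rightarrow> real) \<Rightarrow> 'o set \<Rightarrow> ('o \<Rightarrow> 'v \<Rightarrow> real) \<Rightarrow> bool" where
  "gpt_measurement S u \<Omega> M \<longleftrightarrow> finite \<Omega> \<and> \<Omega> \<noteq> {} \<and> (\<forall>x\<in>\<Omega>. gpt_effect S (M x)) \<and>
     (\<forall>v. (\<Sum>x\<in>\<Omega>. M x v) = u v)"

definition gpt_mixture :: "nat \<Rightarrow> (nat \<Rightarrow> real) \<Rightarrow> (nat \<Rightarrow> 'o \<Rightarrow> 'v \<Rightarrow> real) \<Rightarrow> 'o \<Rightarrow> 'v \<Rightarrow> real" where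
  "gpt_mixture l p N = (\<lambda>x v. \<Sum>i<l. p i * N i x v)"

definition rat_success ::
  "'v::euclidean_space set \<Rightarrow> nat \<Rightarrow> (nat \<Rightarrow> 'o set) \<Rightarrow> (nat \<Rightarrow> 'o \<Rightarrow> 'v \<Rightarrow> real) \<Rightarrow> real" where
  "rat_success S k \<Omega> M =
     (\<Sum>x\<in>PiE {..<k} \<Omega>. gpt_norm S (\<lambda>s. \<Sum>j<k. M j (x j) s))
       / (real k * (\<Prod>j<k. real (card (\<Omega> j))))"

end

theory Submission
  imports Defs
begin

lemma sup_mix_le:
  fixes S :: "'v set" and g :: "nat \<Rightarrow> 'v \<Rightarrow> real"
  assumes "S \<noteq> {}" and "\<And>i. i < l \<Longrightarrow> p i \<ge> 0"
    and "\<And>i s. i < l \<Longrightarrow> s \<in> S \<Longrightarrow> \<bar>g i s\<bar> \<le> B"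
  shows "(SUP s\<in>S. \<bar>\<Sum>i<l. p i * g i s\<bar>) \<le> (\<Sum>i<l. p i * (SUP s\<in>S. \<bar>g i s\<bar>))"
proof (rule cSUP_least[OF assms(1)])
  fix s assume s: "s \<in> S"
  have "\<bar>\<Sum>i<l. p i * g i s\<bar> \<le> (\<Sum>i<l. \<bar>p i * g i s\<bar>)" by (rule sum_abs)
  also have "\<dots> = (\<Sum>i<l. p i * \<bar>g i s\<bar>)"
    by (rule sum.cong) (auto simp: abs_mult assms(2))
  also have "\<dots> \<le> (\<Sum>i<l. p i * (SUP s\<in>S. \<bar>g i s\<bar>))"
  proof (rule sum_mono)
    fix i assume i: "i \<in> {..<l}"
    have bdd: "bdd_above ((\<lambda>s. \<bar>g i s\<bar>) ` S)"
      using assms(3) i by (intro bdd_aboveI[where M=B]) auto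
    have "\<bar>g i s\<bar> \<le> (SUP s\<in>S. \<bar>g i s\<bar>)" by (rule cSUP_upper[OF s bdd])
    then show "p i * \<bar>g i s\<bar> \<le> p i * (SUP s\<in>S. \<bar>g i s\<bar>)"
      using assms(2) i by (intro mult_left_mono) auto
  qed
  finally show "\<bar>\<Sum>i<l. p i * g i s\<bar> \<le> (\<Sum>i<l. p i * (SUP s\<in>S. \<bar>g i s\<bar>))" .
qed

theorem mainTheorem5:
  fixes S :: "'v::euclidean_space set" and u :: "'v \<Rightarrow> real"
    and k l :: nat and \<Omega> :: "nat \<Rightarrow> 'o set"
    and N :: "nat \<Rightarrow> 'o \<Rightarrow> 'v \<Rightarrow> real" and M :: "nat \<Rightarrow> 'o \<Rightarrow> 'v \<Rightarrow> real"
    and p :: "nat \<Rightarrow> real"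
  assumes "gpt_state_space S u"
    and "k \<ge> 1" and "l \<ge> 1"
    and "\<And>i. i < l \<Longrightarrow> gpt_measurement S u (\<Omega> 0) (N i)"
    and "\<And>i. i < l \<Longrightarrow> p i \<ge> 0" and "(\<Sum>i<l. p i) = 1"
    and "\<And>j. 1 \<le> j \<Longrightarrow> j < k \<Longrightarrow> gpt_measurement S u (\<Omega> j) (M j)"
  shows "rat_success S k \<Omega> (M(0 := gpt_mixture l p N))
           \<le> (\<Sum>i<l. p i * rat_success S k \<Omega> (M(0 := N i)))
       \<and> (\<Sum>i<l. p i * rat_success S k \<Omega> (M(0 := N i)))
           \<le> Max ((\<lambda>j. rat_success S k \<Omega> (M(0 := N j))) ` {..<l})"
proof
  have Sne: "S \<noteq> {}" using assms(1) by (simp add: gpt_state_space_def)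
  define D where "D = real k * (\<Prod>j<k. real (card (\<Omega> j)))"
  have D0: "D \<ge> 0" unfolding D_def by (intro mult_nonneg_nonneg prod_nonneg) auto
  define G where "G i x s = (\<Sum>j<k. (M(0 := N i)) j (x j) s)" for i x s
  have eff: "0 \<le> (M(0 := N i)) j (x j) s \<and> (M(0 := N i)) j (x j) s \<le> 1"
    if "i < l" "x \<in> PiE {..<k} \<Omega>" "s \<in> S" "j < k" for i x j s
  proof (cases "j = 0")
    case True
    then have "x 0 \<in> \<Omega> 0" using that by (auto simp: PiE_def Pi_def)
    then show ?thesis using assms(4)[OF that(1)] True that(3)
      by (auto simp: gpt_measurement_def gpt_effect_def)
  next
    case False
    then have "x j \<in> \<Omega> j" using that by (auto simp: PiE_def Pi_def)
    then show ?thesis using assms(7)[of j] False that(3,4)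
      by (auto simp: gpt_measurement_def gpt_effect_def)
  qed
  have Gb: "\<bar>G i x s\<bar> \<le> real k" if "i < l" "x \<in> PiE {..<k} \<Omega>" "s \<in> S" for i x s
  proof -
    have "\<bar>G i x s\<bar> \<le> (\<Sum>j<k. \<bar>(M(0 := N i)) j (x j) s\<bar>)" unfolding G_def by (rule sum_abs)
    also have "\<dots> \<le> (\<Sum>j<k. 1)" using eff[OF that] by (intro sum_mono) auto
    finally show ?thesis by simp
  qed
  have Fx: "(\<Sum>j<k. (M(0 := gpt_mixture l p N)) j (x j) s) = (\<Sum>i<l. p i * G i x s)" for x s
  proof -
    have "(\<Sum>i<l. p i * G i x s) = (\<Sum>j<k. \<Sum>i<l. p i * (M(0 := N i)) j (x j) s)"
      unfolding G_def by (simp add: sum_distrib_left sum.swap[of _ "{..<l}"])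
    also have "\<dots> = (\<Sum>j<k. (M(0 := gpt_mixture l p N)) j (x j) s)"
    proof (rule sum.cong)
      fix j assume "j \<in> {..<k}"
      show "(\<Sum>i<l. p i * (M(0 := N i)) j (x j) s) = (M(0 := gpt_mixture l p N)) j (x j) s"
      proof (cases "j = 0")
        case True then show ?thesis by (simp add: gpt_mixture_def)
      next
        case False
        then have "(\<Sum>i<l. p i * (M(0 := N i)) j (x j) s) = (\<Sum>i<l. p i) * M j (x j) s"
          by (simp add: sum_distrib_right)
        then show ?thesis using False assms(6) by simp
      qed
    qed simp
    finally show ?thesis by simp
  qed
  have "(\<Sum>x\<in>PiE {..<k} \<Omega>. gpt_norm S (\<lambda>s. \<Sum>j<k. (M(0 := gpt_mixture l p N)) j (x j) s))
      \<le> (\<Sum>x\<in>PiE {..<k} \<Omega>. \<Sum>i<l. p i * gpt_norm S (G i x))"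
  proof (rule sum_mono)
    fix x assume x: "x \<in> PiE {..<k} \<Omega>"
    show "gpt_norm S (\<lambda>s. \<Sum>j<k. (M(0 := gpt_mixture l p N)) j (x j) s)
        \<le> (\<Sum>i<l. p i * gpt_norm S (G i x))"
      unfolding gpt_norm_def Fx
      by (rule sup_mix_le[where B="real k"]) (simp_all add: Sne assms(5) Gb[OF _ x])
  qed
  also have "\<dots> = (\<Sum>i<l. p i * (\<Sum>x\<in>PiE {..<k} \<Omega>. gpt_norm S (G i x)))"
    by (simp add: sum_distrib_left sum.swap[of _ "{..<l}"])
  finally have main: "(\<Sum>x\<in>PiE {..<k} \<Omega>. gpt_norm S (\<lambda>s. \<Sum>j<k. (M(0 := gpt_mixture l p N)) j (x j) s))
      \<le> (\<Sum>i<l. p i * (\<Sum>x\<in>PiE {..<k} \<Omega>. gpt_norm S (G i x)))" .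
  have "rat_success S k \<Omega> (M(0 := gpt_mixture l p N))
      \<le> (\<Sum>i<l. p i * (\<Sum>x\<in>PiE {..<k} \<Omega>. gpt_norm S (G i x))) / D"
    unfolding rat_success_def D_def[symmetric] using main D0 by (rule divide_right_mono)
  also have "\<dots> = (\<Sum>i<l. p i * rat_success S k \<Omega> (M(0 := N i)))"
    unfolding rat_success_def D_def[symmetric] G_def
    by (simp add: sum_divide_distrib[symmetric])
  finally show "rat_success S k \<Omega> (M(0 := gpt_mixture l p N))
           \<le> (\<Sum>i<l. p i * rat_success S k \<Omega> (M(0 := N i)))" .
next
  let ?r = "\<lambda>j. rat_success S k \<Omega> (M(0 := N j))"
  have "(\<Sum>i<l. p i * ?r i) \<le> (\<Sum>i<l. p i * Max (?r ` {..<l}))"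
    using assms(5) by (intro sum_mono mult_left_mono Max_ge) auto
  also have "\<dots> = Max (?r ` {..<l})" using assms(6) by (simp add: sum_distrib_right[symmetric])
  finally show "(\<Sum>i<l. p i * ?r i) \<le> Max (?r ` {..<l})" .
qed

end
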